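(* Let $X,Z\in\mathbb{R}^{n\times r}$ with $XX^{T}\ne ZZ^{T}$. Let $Z_{\perp}=(I-XX^{\dagger})Z$, $$\alpha=\frac{\|Z_{\perp}Z_{\perp}^{T}\|_{F}}{\|XX^{T}-ZZ^{T}\|_{F}},\qquad\beta=\frac{\sigma_{\min}^{2}(X)}{\|XX^{T}-ZZ^{T}\|_{F}}\cdot\frac{\mathrm{tr}(Z_{\perp}Z_{\perp}^{T})}{\|Z_{\perp}Z_{\perp}^{T}\|_{F}},$$ and for $t\ge0$ let $$\psi(\alpha,\beta,t)=\begin{cases}(t/\beta)\alpha+\sqrt{1-(t/\beta)^{2}}\sqrt{1-\alpha^{2}} & \text{if }t/\beta\le\alpha,\\ 1 & \text{if }t/\beta>\alpha.\end{cases}$$ If $\beta>0$, then $\cos\theta(t)\ge\psi(\alpha,\beta,t)$ for all $t\ge0$.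
   Context: $\mathbf{e}=\mathrm{vec}(XX^{T}-ZZ^{T})\in\mathbb{R}^{n^{2}}$ (column-stacking) and $\mathbf{J}\in\mathbb{R}^{n^{2}\times nr}$ satisfies $\mathbf{J}\,\mathrm{vec}(Y)=\mathrm{vec}(XY^{T}+YX^{T})$ for all $Y\in\mathbb{R}^{n\times r}$. For $t\ge0$, $\cos\theta(t)$ is the maximum of $\frac{\mathbf{e}^{T}[\mathbf{J}y-w]}{\|\mathbf{e}\|\|\mathbf{J}y-w\|}$ over $y\in\mathbb{R}^{nr}$ and $W_{i,j}\in\mathbb{R}^{n\times n}$ ($i,j=1,\dots,r$) subject to $\frac{\langle\mathbf{J}^{T}\mathbf{J},W\rangle}{\|\mathbf{e}\|\|\mathbf{J}y-w\|}=2t$ and $W\succeq0$, where $W=[W_{i,j}]_{i,j=1}^{r}$ and $w=\sum_{i=1}^{r}\mathrm{vec}(W_{i,i})$. $A^{\dagger}$ is the pseudoinverse and $\sigma_{\min}(X)$ the $r$-th singular value of $X$. *)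

theory Defs
  imports "HOL-Analysis.Analysis"
begin

text \<open>Matrices are \<open>real^'c^'r\<close> (rows indexed by 'r, columns by 'c).
  Column stacking: for an m x k matrix M, vecm M is indexed by pairs (j,i) with
  j the column index and i the row index, i.e. the block of column j comes as
  one contiguous block.  So R^(nr) = real^('r \<times> 'n) and R^(n^2) = real^('n \<times> 'n).\<close>

definition vecm :: "real^'c^'m \<Rightarrow> real^('c \<times> 'm)" where
  "vecm M = (\<chi> p. M $ snd p $ fst p)"

definition frob_norm :: "real^'c^'m \<Rightarrow> real" where
  "frob_norm A = sqrt (\<Sum>i\<in>UNIV. \<Sum>j\<in>UNIV. (A $ i $ j)^2)"

definition frob_inner :: "real^'c^'m \<Rightarrow> real^'c^'m \<Rightarrow> real" where
  "frob_inner A B = (\<Sum>i\<in>UNIV. \<Sum>j\<in>UNIV. A $ i $ j * B $ i $ j)"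

definition pinv :: "real^'c^'m \<Rightarrow> real^'m^'c" where
  "pinv A = (THE B. A ** B ** A = A \<and> B ** A ** B = B \<and>
                    transpose (A ** B) = A ** B \<and> transpose (B ** A) = B ** A)"

definition sigma_min :: "real^'r^'n \<Rightarrow> real" where
  "sigma_min X = sqrt (Min {l. \<exists>v. v \<noteq> 0 \<and> (transpose X ** X) *v v = l *s v})"

definition psd :: "real^'k^'k \<Rightarrow> bool" where
  "psd W \<longleftrightarrow> transpose W = W \<and> (\<forall>x. 0 \<le> x \<bullet> (W *v x))"

definition jac :: "real^'r::finite^'n::finite \<Rightarrow> real^('r \<times> 'n)^('n \<times> 'n)" where
  "jac X = (THE J. \<forall>Y :: real^'r^'n.
              J *v vecm Y = vecm (X ** transpose Y + Y ** transpose X))"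

definition err_vec :: "real^'r^'n \<Rightarrow> real^'r^'n \<Rightarrow> real^('n \<times> 'n)" where
  "err_vec X Z = vecm (X ** transpose X - Z ** transpose Z)"

text \<open>For W an nr x nr matrix viewed as r x r blocks W_{i,j} of size n x n
  (index (i,a) = block i, position a), w = sum_i vec(W_{i,i}).\<close>
definition diag_block :: "real^('r::finite \<times> 'n::finite)^('r \<times> 'n) \<Rightarrow> 'r \<Rightarrow> real^'n^'n" where
  "diag_block W i = (\<chi> a b. W $ (i, a) $ (i, b))"

definition wvec :: "real^('r::finite \<times> 'n::finite)^('r \<times> 'n) \<Rightarrow> real^('n \<times> 'n)" where
  "wvec W = (\<Sum>i\<in>UNIV. vecm (diag_block W i))"

definition cos_theta :: "real^'r^'n \<Rightarrow> real^'r^'n \<Rightarrow> real \<Rightarrow> real" where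
  "cos_theta X Z t = Sup {(err_vec X Z \<bullet> (jac X *v y - wvec W)) /
                            (norm (err_vec X Z) * norm (jac X *v y - wvec W)) | y W.
       jac X *v y - wvec W \<noteq> 0 \<and> psd W \<and>
       frob_inner (transpose (jac X) ** jac X) W /
          (norm (err_vec X Z) * norm (jac X *v y - wvec W)) = 2 * t}"

definition psi :: "real \<Rightarrow> real \<Rightarrow> real \<Rightarrow> real" where
  "psi \<alpha> \<beta> t = (if t / \<beta> \<le> \<alpha>
      then (t / \<beta>) * \<alpha> + sqrt (1 - (t / \<beta>)^2) * sqrt (1 - \<alpha>^2)
      else 1)"

end

theory Submission
  imports Defs
begin


lemma vecm_nth[simp]: "vecm M $ p = M $ snd p $ fst p" by (simp add: vecm_def)

lemma vecm_add: "vecm (A + B) = vecm A + vecm B" by (simp add: vec_eq_iff)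
lemma vecm_diff: "vecm (A - B) = vecm A - vecm B" by (simp add: vec_eq_iff)
lemma vecm_scale: "vecm (c *\<^sub>R A) = c *\<^sub>R vecm A" by (simp add: vec_eq_iff)
lemma vecm_zero: "vecm 0 = 0" by (simp add: vec_eq_iff)
lemma vecm_inj: "vecm A = vecm B \<longleftrightarrow> A = B"
  by (auto simp: vec_eq_iff)

lemma vecm_inner: "vecm A \<bullet> vecm B = frob_inner A B"
proof -
  have "vecm A \<bullet> vecm B = (\<Sum>p\<in>UNIV \<times> UNIV. A $ snd p $ fst p * B $ snd p $ fst p)"
    by (simp add: inner_vec_def UNIV_Times_UNIV)
  also have "\<dots> = (\<Sum>j\<in>UNIV. \<Sum>i\<in>UNIV. A $ i $ j * B $ i $ j)"
    by (simp add: sum.cartesian_product case_prod_unfold)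
  also have "\<dots> = frob_inner A B" unfolding frob_inner_def by (rule sum.swap)
  finally show ?thesis .
qed

lemma frob_norm_vecm: "frob_norm A = norm (vecm A)"
  by (simp add: norm_eq_sqrt_inner vecm_inner frob_inner_def frob_norm_def power2_eq_square)

lemma sum3_rot: "(\<Sum>a\<in>UNIV. \<Sum>b\<in>UNIV. \<Sum>c\<in>UNIV. f a b c) = (\<Sum>b\<in>UNIV. \<Sum>c\<in>UNIV. \<Sum>a\<in>UNIV. (f a b c :: real))"
proof -
  have "(\<Sum>a\<in>UNIV. \<Sum>b\<in>UNIV. \<Sum>c\<in>UNIV. f a b c) = (\<Sum>b\<in>UNIV. \<Sum>a\<in>UNIV. \<Sum>c\<in>UNIV. f a b c)"
    by (rule sum.swap)
  also have "\<dots> = (\<Sum>b\<in>UNIV. \<Sum>c\<in>UNIV. \<Sum>a\<in>UNIV. f a b c)"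
    by (rule sum.cong[OF refl], rule sum.swap)
  finally show ?thesis .
qed

lemma sum3_rev: "(\<Sum>a\<in>UNIV. \<Sum>b\<in>UNIV. \<Sum>c\<in>UNIV. f a b c) = (\<Sum>c\<in>UNIV. \<Sum>b\<in>UNIV. \<Sum>a\<in>UNIV. (f a b c :: real))"
proof -
  have "(\<Sum>a\<in>UNIV. \<Sum>b\<in>UNIV. \<Sum>c\<in>UNIV. f a b c) = (\<Sum>c\<in>UNIV. \<Sum>a\<in>UNIV. \<Sum>b\<in>UNIV. f a b c)"
    using sum3_rot[of f] sum3_rot[of "\<lambda>b c a. f a b c"] by simp
  also have "\<dots> = (\<Sum>c\<in>UNIV. \<Sum>b\<in>UNIV. \<Sum>a\<in>UNIV. f a b c)"
    by (rule sum.cong[OF refl], rule sum.swap)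
  finally show ?thesis .
qed

lemma frob_mult_left: "frob_inner (A ** B) C = frob_inner B (transpose A ** C)"
  unfolding frob_inner_def matrix_matrix_mult_def transpose_def
  apply (simp add: sum_distrib_left sum_distrib_right mult_ac)
  using sum3_rev[of "\<lambda>a c b. C $ a $ c * (B $ b $ c * A $ a $ b)"] by simp

lemma frob_mult_right: "frob_inner (A ** B) C = frob_inner A (C ** transpose B)"
  unfolding frob_inner_def matrix_matrix_mult_def transpose_def
  apply (simp add: sum_distrib_left sum_distrib_right mult_ac)
  by (rule sum.cong[OF refl], simp add: sum.swap[of "\<lambda>j n. C $ _ $ n * (B $ j $ n * A $ _ $ j)"])

lemma frob_transpose: "frob_inner (transpose A) (transpose B) = frob_inner A B"
  unfolding frob_inner_def transpose_def by (simp, subst sum.swap, simp)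

lemma frob_sym: "frob_inner A B = frob_inner B A"
  unfolding frob_inner_def by (simp add: mult.commute)

lemma matrix_add_rdistrib: "((B + C) ** A) = (B ** A) + (C ** A)"
  by (vector matrix_matrix_mult_def sum.distrib[symmetric] field_simps)
lemma matrix_diff_ldistrib: "(A ** (B - C)) = (A ** B) - (A ** (C::real^_^_))"
  by (vector matrix_matrix_mult_def sum_subtractf[symmetric] field_simps)
lemma matrix_diff_rdistrib: "((B - C) ** A) = (B ** A) - (C ** (A::real^_^_))"
  by (vector matrix_matrix_mult_def sum_subtractf[symmetric] field_simps)
lemma transpose_add: "transpose (A + B) = transpose A + transpose B"
  by (simp add: transpose_def vec_eq_iff)
lemma transpose_diff: "transpose (A - B) = transpose A - transpose B"
  by (simp add: transpose_def vec_eq_iff)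
lemma transpose_zero: "transpose 0 = 0"
  by (simp add: transpose_def vec_eq_iff)



definition unvec :: "real^('c \<times> 'm) \<Rightarrow> real^'c^'m" where
  "unvec v = (\<chi> i j. v $ (j, i))"

lemma vecm_unvec[simp]: "vecm (unvec v) = v"
  by (simp add: vec_eq_iff unvec_def vecm_def)

lemma sum_pair_UNIV: "(\<Sum>q\<in>UNIV. g q) = (\<Sum>k\<in>UNIV. \<Sum>i\<in>UNIV. (g (k,i)::real))"
  by (subst sum.cartesian_product) simp

lemma sum_if_mult: "(\<Sum>i\<in>UNIV. (if i = (a::'a::finite) then c else 0) * (f i::real)) = c * f a"
proof -
  have "(\<Sum>i\<in>UNIV. (if i = a then c else 0) * f i) = (\<Sum>i\<in>UNIV. if i = a then c * f i else 0)"
    by (rule sum.cong) auto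
  also have "\<dots> = c * f a" by simp
  finally show ?thesis .
qed

definition J0 :: "real^'r::finite^'n::finite \<Rightarrow> real^('r \<times> 'n)^('n \<times> 'n)" where
  "J0 X = (\<chi> p q. (if snd q = fst p then X $ snd p $ fst q else 0) +
                  (if snd q = snd p then X $ fst p $ fst q else 0))"

lemma J0_works: fixes X Y :: "real^'r::finite^'n::finite" shows "J0 X *v vecm Y = vecm (X ** transpose Y + Y ** transpose X)"
proof -
  have "(J0 X *v vecm Y) $ (a,b) = vecm (X ** transpose Y + Y ** transpose X) $ (a,b)" for a b
  proof -
    define p where p: "p = (a,b)"
    have "(J0 X *v vecm Y) $ (a,b) = (\<Sum>q\<in>UNIV. ((if snd q = a then X $ b $ fst q else 0) +
                  (if snd q = b then X $ a $ fst q else 0)) * Y $ snd q $ fst q)"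
      by (simp add: matrix_vector_mult_def J0_def cong: if_cong)
    also have "\<dots> = (\<Sum>k\<in>UNIV. \<Sum>i\<in>UNIV. ((if i = a then X $ b $ k else 0) +
                  (if i = b then X $ a $ k else 0)) * Y $ i $ k)"
      using sum_pair_UNIV[of "\<lambda>q. ((if snd q = a then X $ b $ fst q else 0) +
                  (if snd q = b then X $ a $ fst q else 0)) * Y $ snd q $ fst q"] by (simp cong: if_cong)
    also have "\<dots> = (\<Sum>k\<in>UNIV. X $ b $ k * Y $ a $ k + X $ a $ k * Y $ b $ k)"
      by (simp add: distrib_right sum.distrib sum_if_mult)
    also have "\<dots> = vecm (X ** transpose Y + Y ** transpose X) $ (a,b)"
      by (simp add: matrix_matrix_mult_def transpose_def sum.distrib mult.commute)
    finally show ?thesis .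
  qed
  then show ?thesis by (simp add: vec_eq_iff split_paired_all)
qed

lemma jac_works: fixes X Y :: "real^'r::finite^'n::finite" shows "jac X *v vecm Y = vecm (X ** transpose Y + Y ** transpose X)"
proof -
  have ex: "\<exists>!J. \<forall>Y :: real^'r^'n. J *v vecm Y = vecm (X ** transpose Y + Y ** transpose X)"
  proof (rule ex1I[of _ "J0 X"])
    show "\<forall>Y :: real^'r^'n. J0 X *v vecm Y = vecm (X ** transpose Y + Y ** transpose X)" by (simp add: J0_works)
    fix J assume h: "\<forall>Y :: real^'r^'n. J *v vecm Y = vecm (X ** transpose Y + Y ** transpose X)"
    show "J = J0 X" unfolding matrix_eq
    proof
      fix v
      have "J *v vecm (unvec v) = J0 X *v vecm (unvec v)" using h J0_works by metis
      then show "J *v v = J0 X *v v" by simp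
    qed
  qed
  show ?thesis unfolding jac_def using theI'[OF ex] by blast
qed



definition penrose :: "real^'c^'m \<Rightarrow> real^'m^'c \<Rightarrow> bool" where
  "penrose A B \<longleftrightarrow> A ** B ** A = A \<and> B ** A ** B = B \<and>
                    transpose (A ** B) = A ** B \<and> transpose (B ** A) = B ** A"

lemma penrose_unique:
  assumes b: "penrose M B" and c: "penrose M C"
  shows "B = C"
proof -
  have b1: "M ** B ** M = M" and b2: "B ** M ** B = B" and b3: "transpose (M ** B) = M ** B"
    and b4: "transpose (B ** M) = B ** M" using b unfolding penrose_def by auto
  have c1: "M ** C ** M = M" and c2: "C ** M ** C = C" and c3: "transpose (M ** C) = M ** C"
    and c4: "transpose (C ** M) = C ** M" using c unfolding penrose_def by auto
  have "B = B ** (M ** B)" using b2 by (simp add: matrix_mul_assoc)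
  also have "\<dots> = B ** transpose (M ** B)" using b3 by simp
  also have "\<dots> = B ** transpose B ** transpose M" by (simp add: matrix_transpose_mul matrix_mul_assoc)
  also have "\<dots> = B ** transpose B ** transpose (M ** C ** M)" using c1 by simp
  also have "\<dots> = B ** transpose (M ** B) ** transpose (M ** C)"
    by (simp add: matrix_transpose_mul matrix_mul_assoc)
  also have "\<dots> = B ** (M ** B) ** (M ** C)" using b3 c3 by simp
  also have "\<dots> = (B ** M ** B) ** M ** C" by (simp add: matrix_mul_assoc)
  also have "\<dots> = B ** M ** C" using b2 by simp
  finally have 1: "B = B ** M ** C" .
  have "C = (C ** M) ** C" using c2 by (simp add: matrix_mul_assoc)
  also have "\<dots> = transpose (C ** M) ** C" using c4 by simp
  also have "\<dots> = transpose M ** transpose C ** C" by (simp add: matrix_transpose_mul)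
  also have "\<dots> = transpose (M ** B ** M) ** transpose C ** C" using b1 by simp
  also have "\<dots> = transpose (B ** M) ** transpose (C ** M) ** C"
    by (simp add: matrix_transpose_mul matrix_mul_assoc)
  also have "\<dots> = (B ** M) ** (C ** M) ** C" using b4 c4 by simp
  also have "\<dots> = B ** M ** (C ** M ** C)" by (simp add: matrix_mul_assoc)
  also have "\<dots> = B ** M ** C" using c2 by simp
  finally have 2: "C = B ** M ** C" .
  from 1 2 show ?thesis by simp
qed

lemma pinv_props:
  fixes X :: "real^'r^'n"
  assumes inv: "invertible (transpose X ** X)"
  shows "X ** pinv X ** X = X" "transpose (X ** pinv X) = X ** pinv X"
proof -
  define A where "A = transpose X ** X"
  obtain Ai where ai1: "A ** Ai = mat 1" and ai2: "Ai ** A = mat 1"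
    using inv unfolding invertible_def A_def by blast
  have At: "transpose A = A" unfolding A_def by (simp add: matrix_transpose_mul)
  have "transpose Ai = transpose Ai ** (A ** Ai)" using ai1 by simp
  also have "\<dots> = transpose (A ** Ai) ** Ai" by (simp add: matrix_transpose_mul matrix_mul_assoc At)
  also have "\<dots> = Ai" using ai1 by simp
  finally have Ait: "transpose Ai = Ai" .
  define B0 where "B0 = Ai ** transpose X"
  have "penrose X B0"
    unfolding penrose_def
  proof (intro conjI)
    show "X ** B0 ** X = X" unfolding B0_def
      using ai2 by (simp add: matrix_mul_assoc[symmetric] A_def)
    show "B0 ** X ** B0 = B0" unfolding B0_def
      using ai2 by (simp add: matrix_mul_assoc A_def)
    show "transpose (X ** B0) = X ** B0" unfolding B0_def
      using Ait by (simp add: matrix_transpose_mul matrix_mul_assoc)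
    show "transpose (B0 ** X) = B0 ** X" unfolding B0_def
      using ai2 by (simp add: matrix_mul_assoc[symmetric] A_def)
  qed
  then have ex: "\<exists>!B. penrose X B" using penrose_unique by blast
  have "penrose X (pinv X)" unfolding pinv_def
    using theI'[OF ex] unfolding penrose_def by simp
  then show "X ** pinv X ** X = X" "transpose (X ** pinv X) = X ** pinv X"
    unfolding penrose_def by auto
qed



lemma sym_inner:
  fixes A :: "real^'n^'n"
  assumes "transpose A = A"
  shows "x \<bullet> (A *v y) = (A *v x) \<bullet> y"
proof -
  have "x \<bullet> (A *v y) = (x v* A) \<bullet> y" by (simp add: dot_lmul_matrix)
  also have "x v* A = transpose A *v x" by simp
  finally show ?thesis using assms by simp
qed

lemma gram_inner:
  fixes X :: "real^'r^'n"
  shows "x \<bullet> ((transpose X ** X) *v x) = norm (X *v x)^2"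
proof -
  have "x \<bullet> ((transpose X ** X) *v x) = x \<bullet> ((X *v x) v* X)"
    by (simp add: matrix_vector_mul_assoc[symmetric])
  also have "\<dots> = (X *v x) \<bullet> (X *v x)" by (metis inner_commute dot_lmul_matrix)
  finally show ?thesis by (simp add: power2_norm_eq_inner)
qed

lemma quad_nonneg_zero:
  fixes c d :: real
  assumes "d \<ge> 0" "\<forall>t. 0 \<le> 2 * t * c + t^2 * d"
  shows "c = 0"
proof -
  define t where "t = - c / (d + 1)"
  have "0 \<le> 2 * t * c + t^2 * d" using assms by auto
  then have "0 \<le> (2 * t * c + t^2 * d) * (d+1)^2" using assms by simp
  also have "(2 * t * c + t^2 * d) * (d+1)^2 = 2 * c * (d+1) * (t * (d+1)) + d * (t * (d+1))^2"
    by (simp add: algebra_simps power2_eq_square)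
  also have "t * (d+1) = - c" unfolding t_def using assms(1) by simp
  also have "2 * c * (d+1) * (- c) + d * (- c)^2 = -(c^2 * (d + 2))"
    by (simp add: algebra_simps power2_eq_square)
  finally have "c^2 * (d+2) \<le> 0" by simp
  then have "c^2 \<le> 0" using assms(1) by (simp add: mult_le_0_iff)
  then show ?thesis by simp
qed

lemma sym_eigen_exists:
  fixes A :: "real^'n^'n"
  assumes At: "transpose A = A"
  shows "\<exists>v l. v \<noteq> 0 \<and> A *v v = l *s v"
proof -
  let ?f = "\<lambda>x. x \<bullet> (A *v x)"
  have cont: "continuous_on (sphere 0 1) ?f"
    by (intro continuous_intros linear_continuous_on matrix_vector_mul_bounded_linear)
  have ne: "sphere (0::real^'n) 1 \<noteq> {}"
    by simp
  obtain x0 where x0: "x0 \<in> sphere 0 1" and min: "\<forall>y\<in>sphere 0 1. ?f x0 \<le> ?f y"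
    using continuous_attains_inf[OF compact_sphere ne cont] by blast
  define l where "l = ?f x0"
  have nx0: "norm x0 = 1" using x0 by simp
  have q: "0 \<le> ?f y - l * (y \<bullet> y)" for y
  proof (cases "y = 0")
    case True then show ?thesis by simp
  next
    case False
    define u where "u = y /\<^sub>R norm y"
    have "u \<in> sphere 0 1" using False by (simp add: u_def)
    then have "l \<le> ?f u" using min l_def by blast
    also have "?f u = ?f y / (norm y)^2"
      by (simp add: u_def matrix_vector_mult_scaleR power2_eq_square divide_inverse inverse_mult_distrib mult_ac)
    finally have "l * (norm y)^2 \<le> ?f y" using False by (simp add: field_simps)
    then show ?thesis by (simp add: power2_norm_eq_inner)
  qed
  define g where "g = A *v x0 - l *\<^sub>R x0"
  have "g \<bullet> g = 0"
  proof -
    have "0 \<le> 2 * t * (g \<bullet> g) + t^2 * (?f g - l * (g \<bullet> g))" for t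
    proof -
      have "0 \<le> ?f (x0 + t *\<^sub>R g) - l * ((x0 + t *\<^sub>R g) \<bullet> (x0 + t *\<^sub>R g))" by (rule q)
      also have "?f (x0 + t *\<^sub>R g) - l * ((x0 + t *\<^sub>R g) \<bullet> (x0 + t *\<^sub>R g)) =
          (?f x0 - l * (x0 \<bullet> x0)) + 2 * t * (g \<bullet> (A *v x0) - l * (g \<bullet> x0)) + t^2 * (?f g - l * (g \<bullet> g))"
        using sym_inner[OF At, of x0 g]
        by (simp add: matrix_vector_right_distrib matrix_vector_mult_scaleR inner_add_left inner_add_right
            inner_commute algebra_simps power2_eq_square)
      also have "?f x0 - l * (x0 \<bullet> x0) = 0" using nx0 by (simp add: l_def power2_norm_eq_inner[symmetric])
      also have "g \<bullet> (A *v x0) - l * (g \<bullet> x0) = g \<bullet> g"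
        by (simp add: g_def inner_diff_right)
      finally show ?thesis by simp
    qed
    then show ?thesis using quad_nonneg_zero[of "?f g - l * (g \<bullet> g)" "g \<bullet> g"] q by blast
  qed
  then have "A *v x0 = l *s x0" by (simp add: g_def scalar_mult_eq_scaleR)
  moreover have "x0 \<noteq> 0" using nx0 by auto
  ultimately show ?thesis by blast
qed



lemma sigma_facts:
  fixes X :: "real^'r^'n"
  shows "\<exists>m. m \<noteq> 0 \<and> (transpose X ** X) *v m = (sigma_min X)^2 *s m"
    and "sigma_min X \<ge> 0"
    and "\<not> invertible (transpose X ** X) \<Longrightarrow> sigma_min X = 0"
proof -
  define A where "A = transpose X ** X"
  define S where "S = {l. \<exists>v. v \<noteq> 0 \<and> A *v v = l *s v}"
  have sm: "sigma_min X = sqrt (Min S)" unfolding sigma_min_def S_def A_def by simp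
  have At: "transpose A = A" unfolding A_def by (simp add: matrix_transpose_mul)
  have nonneg: "l \<ge> 0" if lS: "l \<in> S" for l
  proof -
    obtain v where v: "v \<noteq> 0" "A *v v = l *s v" using lS S_def by auto
    have "l * (v \<bullet> v) = v \<bullet> (A *v v)" using v by (simp add: scalar_mult_eq_scaleR)
    also have "\<dots> \<ge> 0" unfolding A_def gram_inner by simp
    finally have "0 \<le> l * (v \<bullet> v)" .
    moreover have "v \<bullet> v > 0" using v by simp
    ultimately show ?thesis by (simp add: zero_le_mult_iff)
  qed
  define ev where "ev l = (SOME v. v \<noteq> 0 \<and> A *v v = l *s v)" for l
  have ev: "ev l \<noteq> 0 \<and> A *v ev l = l *s ev l" if "l \<in> S" for l
  proof -
    have "\<exists>v. v \<noteq> 0 \<and> A *v v = l *s v" using that S_def by auto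
    then show ?thesis unfolding ev_def by (rule someI_ex)
  qed
  have orth: "ev l1 \<bullet> ev l2 = 0" if "l1 \<in> S" "l2 \<in> S" "l1 \<noteq> l2" for l1 l2
  proof -
    have "l1 * (ev l1 \<bullet> ev l2) = (A *v ev l1) \<bullet> ev l2" using ev[OF that(1)] by (simp add: scalar_mult_eq_scaleR)
    also have "\<dots> = ev l1 \<bullet> (A *v ev l2)" using sym_inner[OF At] by simp
    also have "\<dots> = l2 * (ev l1 \<bullet> ev l2)" using ev[OF that(2)] by (simp add: scalar_mult_eq_scaleR)
    finally have "(l1 - l2) * (ev l1 \<bullet> ev l2) = 0" by (simp add: algebra_simps)
    then show ?thesis using that(3) by simp
  qed
  have inj: "inj_on ev S"
  proof (rule inj_onI)
    fix l1 l2 assume h: "l1 \<in> S" "l2 \<in> S" "ev l1 = ev l2"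
    show "l1 = l2"
    proof (rule ccontr)
      assume "l1 \<noteq> l2"
      then have "ev l1 \<bullet> ev l1 = 0" using orth h by metis
      then show False using ev[OF h(1)] by simp
    qed
  qed
  have "pairwise orthogonal (ev ` S)"
    unfolding pairwise_def orthogonal_def using orth by (metis imageE)
  moreover have "0 \<notin> ev ` S" using ev by auto
  ultimately have "independent (ev ` S)" by (rule pairwise_orthogonal_independent)
  then have "finite (ev ` S)" by (rule independent_imp_finite)
  then have fin: "finite S" using inj finite_imageD by blast
  have ne: "S \<noteq> {}" using sym_eigen_exists[OF At] S_def by auto
  have minS: "Min S \<in> S" using Min_in[OF fin ne] .
  have min0: "Min S \<ge> 0" using nonneg minS by blast
  have sq: "(sigma_min X)^2 = Min S" using sm min0 by simp
  show "\<exists>m. m \<noteq> 0 \<and> (transpose X ** X) *v m = (sigma_min X)^2 *s m"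
    using minS unfolding sq S_def A_def by blast
  show "sigma_min X \<ge> 0" using sm min0 by simp
  assume ninv: "\<not> invertible (transpose X ** X)"
  then obtain x where "x \<noteq> 0" "A *v x = 0"
    unfolding invertible_left_inverse matrix_left_invertible_ker A_def by blast
  then have "0 \<in> S" unfolding S_def by (auto intro!: exI[of _ x])
  then have "Min S \<le> 0" using fin by simp
  then show "sigma_min X = 0" using sm min0 by simp
qed



definition outer :: "real^'k \<Rightarrow> real^'k^'k" where
  "outer u = (\<chi> p q. u $ p * u $ q)"

lemma outer_mv: "outer u *v x = (u \<bullet> x) *\<^sub>R u"
  by (simp add: outer_def vec_eq_iff matrix_vector_mult_def inner_vec_def sum_distrib_left mult_ac)

lemma psd_outer: "psd (outer u)"
  unfolding psd_def
proof
  show "transpose (outer u) = outer u" by (simp add: outer_def transpose_def vec_eq_iff mult.commute)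
  show "\<forall>x. 0 \<le> x \<bullet> (outer u *v x)"
    by (simp add: outer_mv inner_commute)
qed

lemma psd_zero: "psd 0"
  unfolding psd_def by (simp add: transpose_zero)

lemma psd_add: "psd A \<Longrightarrow> psd B \<Longrightarrow> psd (A + B)"
  unfolding psd_def by (simp add: transpose_add matrix_vector_mult_add_rdistrib inner_add_right)

lemma scaleR_mv: "(c *\<^sub>R A) *v x = c *\<^sub>R (A *v (x::real^_))"
  by (simp add: vec_eq_iff matrix_vector_mult_def sum_distrib_left mult_ac)

lemma psd_scale: "psd A \<Longrightarrow> c \<ge> 0 \<Longrightarrow> psd (c *\<^sub>R A)"
  unfolding psd_def by (simp add: transpose_scalar scaleR_mv)

lemma psd_sum: "finite I \<Longrightarrow> (\<And>i. i \<in> I \<Longrightarrow> psd (W i)) \<Longrightarrow> psd (\<Sum>i\<in>I. W i)"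
  by (induction I rule: finite_induct) (auto simp: psd_zero psd_add)

lemma diag_block_add: "diag_block (A + B) i = diag_block A i + diag_block B i"
  by (simp add: diag_block_def vec_eq_iff)
lemma diag_block_scale: "diag_block (c *\<^sub>R A) i = c *\<^sub>R diag_block A i"
  by (simp add: diag_block_def vec_eq_iff)

lemma wvec_add: "wvec (A + B) = wvec A + wvec B"
  by (simp add: wvec_def diag_block_add vecm_add sum.distrib)
lemma wvec_scale: "wvec (c *\<^sub>R A) = c *\<^sub>R wvec A"
  by (simp add: wvec_def diag_block_scale vecm_scale scaleR_sum_right)
lemma wvec_zero: "wvec 0 = 0"
  using wvec_scale[of 0 0] by simp
lemma wvec_sum: "finite I \<Longrightarrow> wvec (\<Sum>i\<in>I. W i) = (\<Sum>i\<in>I. wvec (W i))"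
  by (induction I rule: finite_induct) (auto simp: wvec_zero wvec_add)

lemma wvec_outer: "wvec (outer (vecm U)) = vecm (U ** transpose U)"
proof -
  have "wvec (outer (vecm U)) $ p = vecm (U ** transpose U) $ p" for p
    by (simp add: wvec_def diag_block_def outer_def matrix_matrix_mult_def transpose_def sum_component)
  then show ?thesis by (simp add: vec_eq_iff)
qed

lemma frob_inner_add2: "frob_inner M (A + B) = frob_inner M A + frob_inner M B"
  by (simp add: frob_inner_def distrib_left sum.distrib)
lemma frob_inner_scale2: "frob_inner M (c *\<^sub>R A) = c * frob_inner M A"
  by (simp add: frob_inner_def sum_distrib_left mult_ac)
lemma frob_inner_zero2: "frob_inner M 0 = 0"
  by (simp add: frob_inner_def)
lemma frob_inner_sum2: "finite I \<Longrightarrow> frob_inner M (\<Sum>i\<in>I. W i) = (\<Sum>i\<in>I. frob_inner M (W i))"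
  by (induction I rule: finite_induct) (auto simp: frob_inner_zero2 frob_inner_add2)

lemma frob_JJ_outer: "frob_inner (transpose J ** J) (outer u) = norm (J *v u)^2"
proof -
  have "frob_inner (transpose J ** J) (outer u) = u \<bullet> ((transpose J ** J) *v u)"
    by (simp add: frob_inner_def outer_def inner_vec_def matrix_vector_mult_def sum_distrib_left mult_ac)
  also have "\<dots> = norm (J *v u)^2" by (rule gram_inner)
  finally show ?thesis .
qed



lemma frob_norm_sq: "frob_norm A ^ 2 = (\<Sum>i\<in>UNIV. \<Sum>j\<in>UNIV. (A $ i $ j)^2)"
  unfolding frob_norm_def by (simp add: sum_nonneg)

lemma norm_sq_sum: "norm (v::real^'n) ^ 2 = (\<Sum>a\<in>UNIV. (v $ a)^2)"
  unfolding power2_norm_eq_inner inner_vec_def by (simp add: power2_eq_square)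

lemma outer_sym_norm:
  fixes v z :: "real^'n"
  defines "M \<equiv> (\<chi> a b. v $ a * z $ b)"
  shows "frob_norm (M + transpose M) ^ 2 = 2 * (norm v)^2 * (norm z)^2 + 2 * (v \<bullet> z)^2"
proof -
  have "frob_norm (M + transpose M) ^ 2 = (\<Sum>a\<in>UNIV. \<Sum>b\<in>UNIV. (v $ a * z $ b + v $ b * z $ a)^2)"
    unfolding frob_norm_sq by (simp add: M_def transpose_def)
  also have "\<dots> = (\<Sum>a\<in>UNIV. \<Sum>b\<in>UNIV. (v $ a)^2 * (z $ b)^2) + 2 * (\<Sum>a\<in>UNIV. \<Sum>b\<in>UNIV. (v $ a * z $ a) * (v $ b * z $ b))
       + (\<Sum>a\<in>UNIV. \<Sum>b\<in>UNIV. (v $ b)^2 * (z $ a)^2)"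
    by (simp add: power2_sum sum.distrib sum_distrib_left power_mult_distrib algebra_simps)
  also have "(\<Sum>a\<in>UNIV. \<Sum>b\<in>UNIV. (v $ b)^2 * (z $ a)^2) = (\<Sum>a\<in>UNIV. \<Sum>b\<in>UNIV. (v $ a)^2 * (z $ b)^2)"
    by (subst sum.swap) simp
  also have "(\<Sum>a\<in>UNIV. \<Sum>b\<in>UNIV. (v $ a)^2 * (z $ b)^2) = (norm v)^2 * (norm z)^2"
    unfolding norm_sq_sum by (simp add: sum_product)
  also have "(\<Sum>a\<in>UNIV. \<Sum>b\<in>UNIV. (v $ a * z $ a) * (v $ b * z $ b)) = (v \<bullet> z)^2"
    by (simp add: inner_vec_def power2_eq_square sum_product)
  finally show ?thesis by simp
qed



lemma W0_construction:
  fixes X Zp :: "real^'r^'n" and m :: "real^'r"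
  assumes XZ: "transpose X ** Zp = 0" and nm: "norm m = 1"
  defines "U \<equiv> (\<lambda>i. (\<chi> a j. Zp$a$i * m$j) :: real^'r^'n)"
  shows "(\<Sum>i\<in>UNIV. U i ** transpose (U i)) = Zp ** transpose Zp"
    and "(\<Sum>i\<in>UNIV. norm (jac X *v vecm (U i))^2) = 2 * norm (X *v m)^2 * trace (Zp ** transpose Zp)"
proof -
  have m1: "(\<Sum>j\<in>UNIV. m$j * m$j) = 1" using nm norm_sq_sum[of m] by (simp add: power2_eq_square)
  have "(\<Sum>i\<in>UNIV. U i ** transpose (U i)) $ a $ b = (Zp ** transpose Zp) $ a $ b" for a b
  proof -
    have "(\<Sum>i\<in>UNIV. U i ** transpose (U i)) $ a $ b = (\<Sum>i\<in>UNIV. \<Sum>j\<in>UNIV. Zp$a$i * Zp$b$i * (m$j * m$j))"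
      by (simp add: sum_component U_def matrix_matrix_mult_def transpose_def mult_ac)
    also have "\<dots> = (\<Sum>i\<in>UNIV. Zp$a$i * Zp$b$i)"
      by (simp add: sum_distrib_left[symmetric] m1)
    also have "\<dots> = (Zp ** transpose Zp) $ a $ b"
      by (simp add: matrix_matrix_mult_def transpose_def)
    finally show ?thesis .
  qed
  then show "(\<Sum>i\<in>UNIV. U i ** transpose (U i)) = Zp ** transpose Zp" by (simp add: vec_eq_iff)
  define v where "v = X *v m"
  define z where "z i = (\<chi> b. Zp$b$i)" for i
  have vz: "v \<bullet> z i = 0" for i
  proof -
    have "v \<bullet> z i = (\<Sum>a\<in>UNIV. \<Sum>j\<in>UNIV. X$a$j * m$j * Zp$a$i)"
      by (simp add: v_def z_def inner_vec_def matrix_vector_mult_def sum_distrib_right)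
    also have "\<dots> = (\<Sum>j\<in>UNIV. m$j * (transpose X ** Zp)$j$i)"
      by (subst sum.swap) (simp add: matrix_matrix_mult_def transpose_def sum_distrib_left mult_ac)
    also have "\<dots> = 0" using XZ by simp
    finally show ?thesis .
  qed
  have each: "norm (jac X *v vecm (U i))^2 = 2 * norm v ^2 * norm (z i)^2" for i
  proof -
    have XU: "X ** transpose (U i) = (\<chi> a b. v $ a * z i $ b)"
      by (simp add: vec_eq_iff U_def v_def z_def matrix_matrix_mult_def transpose_def
          matrix_vector_mult_def sum_distrib_left mult_ac)
    have "jac X *v vecm (U i) = vecm (X ** transpose (U i) + transpose (X ** transpose (U i)))"
      by (simp add: jac_works matrix_transpose_mul)
    then have "norm (jac X *v vecm (U i)) = frob_norm ((\<chi> a b. v $ a * z i $ b) + transpose (\<chi> a b. v $ a * z i $ b))"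
      by (simp add: XU frob_norm_vecm)
    then show ?thesis using outer_sym_norm[of v "z i"] vz[of i] by simp
  qed
  have tr: "trace (Zp ** transpose Zp) = (\<Sum>i\<in>UNIV. norm (z i)^2)"
    unfolding trace_def norm_sq_sum z_def
    by (simp add: matrix_matrix_mult_def transpose_def power2_eq_square) (rule sum.swap)
  show "(\<Sum>i\<in>UNIV. norm (jac X *v vecm (U i))^2) = 2 * norm (X *v m)^2 * trace (Zp ** transpose Zp)"
    unfolding each tr by (simp add: v_def sum_distrib_left)
qed



lemma frob_inner_add1: "frob_inner (A + B) M = frob_inner A M + frob_inner B M"
  by (simp add: frob_inner_def distrib_right sum.distrib)

lemma range_orth:
  fixes X Zp Y :: "real^'r^'n"
  assumes XZ: "transpose X ** Zp = 0"
  shows "vecm (Zp ** transpose Zp) \<bullet> (jac X *v vecm Y) = 0"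
proof -
  have 1: "transpose X ** (Zp ** transpose Zp) = 0" using XZ by (simp add: matrix_mul_assoc)
  have 2: "(Zp ** transpose Zp) ** X = 0"
  proof -
    have "transpose Zp ** X = transpose (transpose X ** Zp)" by (simp add: matrix_transpose_mul)
    then show ?thesis using XZ by (simp add: matrix_mul_assoc[symmetric] transpose_zero)
  qed
  have "vecm (Zp ** transpose Zp) \<bullet> (jac X *v vecm Y) = frob_inner (X ** transpose Y + Y ** transpose X) (Zp ** transpose Zp)"
    by (simp add: jac_works vecm_inner frob_sym)
  also have "\<dots> = frob_inner (transpose Y) (transpose X ** (Zp ** transpose Zp)) + frob_inner Y ((Zp ** transpose Zp) ** X)"
    using frob_mult_left[of X "transpose Y" "Zp ** transpose Zp"] frob_mult_right[of Y "transpose X" "Zp ** transpose Zp"]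
    by (simp add: frob_inner_add1)
  also have "\<dots> = 0" using 1 2 by (simp add: frob_inner_def)
  finally show ?thesis .
qed

lemma ER_identity:
  fixes X Zp :: "real^'r^'n" and C :: "real^'r^'r"
  defines "Z \<equiv> X ** C + Zp"
  defines "Y1 \<equiv> X - Zp ** transpose C - Zp ** transpose C - X ** C ** transpose C"
  defines "ER \<equiv> X ** transpose X - Z ** transpose Z + Zp ** transpose Zp"
  shows "X ** transpose Y1 + Y1 ** transpose X = ER + ER"
  unfolding Z_def Y1_def ER_def
  apply (simp only: transpose_add transpose_diff matrix_transpose_mul transpose_transpose matrix_add_ldistrib matrix_add_rdistrib
      matrix_diff_ldistrib matrix_diff_rdistrib matrix_mul_assoc)
  apply (simp add: algebra_simps)
  done



lemma vecm_sum: "vecm (\<Sum>i\<in>I. f i) = (\<Sum>i\<in>I. vecm (f i))"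
  by (simp add: vec_eq_iff sum_component)

lemma not_invertible_zero: "\<not> invertible (0 :: real^'r^'r)"
proof
  assume "invertible (0 :: real^'r^'r)"
  then obtain B :: "real^'r^'r" where "0 ** B = mat 1" unfolding invertible_def by blast
  then have "(mat 1 :: real^'r^'r) $ undefined $ undefined = 0" by (metis times0_left zero_index)
  then show False by (simp add: mat_def)
qed

lemma XXt_nonzero:
  fixes X :: "real^'r^'n"
  assumes "X \<noteq> 0"
  shows "X ** transpose X \<noteq> 0"
proof
  assume h: "X ** transpose X = 0"
  have "X $ a $ j = 0" for a j
  proof -
    have "(X ** transpose X) $ a $ a = 0" using h by simp
    then have "(\<Sum>k\<in>UNIV. (X $ a $ k)^2) = 0"
      by (simp add: matrix_matrix_mult_def transpose_def power2_eq_square)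
    then show ?thesis by (simp add: sum_nonneg_eq_0_iff)
  qed
  then show False using assms by (simp add: vec_eq_iff)
qed

lemma cs_le1:
  fixes e V :: "'a::real_inner"
  assumes "e \<noteq> 0" "V \<noteq> 0"
  shows "(e \<bullet> V) / (norm e * norm V) \<le> 1"
proof -
  have "e \<bullet> V \<le> norm e * norm V" by (rule norm_cauchy_schwarz)
  moreover have "norm e * norm V > 0" using assms by simp
  ultimately show ?thesis by simp
qed



theorem lemma16:
  fixes X Z :: "real^'r^'n"
  assumes "X ** transpose X \<noteq> Z ** transpose Z"
  defines "Zp \<equiv> (mat 1 - X ** pinv X) ** Z"
  defines "\<alpha> \<equiv> frob_norm (Zp ** transpose Zp) / frob_norm (X ** transpose X - Z ** transpose Z)"
  defines "\<beta> \<equiv> (sigma_min X)^2 / frob_norm (X ** transpose X - Z ** transpose Z)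
                * (trace (Zp ** transpose Zp) / frob_norm (Zp ** transpose Zp))"
  assumes "\<beta> > 0"
  shows "\<forall>t \<ge> 0. cos_theta X Z t \<ge> psi \<alpha> \<beta> t"
proof (intro allI impI)
  fix t :: real assume t0: "t \<ge> 0"
  note bpos = assms(5)
  define EE where "EE = X ** transpose X - Z ** transpose Z"
  define G where "G = Zp ** transpose Zp"
  define e where "e = vecm EE"
  define g where "g = vecm G"
  define \<sigma> where "\<sigma> = sigma_min X"
  define trG where "trG = trace G"
  define J where "J = jac X"
  have ee: "err_vec X Z = e" unfolding err_vec_def e_def EE_def ..
  have EE0: "EE \<noteq> 0" using assms(1) unfolding EE_def by simp
  have ne: "norm e > 0" using EE0 unfolding e_def by (simp add: vecm_inj[of EE 0, unfolded vecm_zero])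
  have al: "\<alpha> = norm g / norm e" unfolding \<alpha>_def g_def e_def G_def EE_def by (simp add: frob_norm_vecm)
  have be: "\<beta> = \<sigma>^2 / norm e * (trG / norm g)"
    unfolding \<beta>_def g_def e_def G_def EE_def \<sigma>_def trG_def by (simp add: frob_norm_vecm)
  have ng: "norm g > 0"
  proof -
    have "norm g \<noteq> 0" using bpos be by auto
    then show ?thesis by simp
  qed
  have sig0: "\<sigma> \<noteq> 0" using bpos be by auto
  have inv: "invertible (transpose X ** X)" using sigma_facts(3)[of X] sig0 \<sigma>_def by blast
  note pv = pinv_props[OF inv]
  define P where "P = X ** pinv X"
  have XP: "transpose X ** P = transpose X"
  proof -
    have "transpose X ** P = transpose X ** transpose P" using pv(2) P_def by simp
    also have "\<dots> = transpose (P ** X)" by (simp add: matrix_transpose_mul)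
    also have "P ** X = X" using pv(1) P_def by simp
    finally show ?thesis .
  qed
  have XZ: "transpose X ** Zp = 0"
    unfolding Zp_def P_def[symmetric] using XP
    by (simp add: matrix_mul_assoc matrix_diff_ldistrib)
  define C where "C = pinv X ** Z"
  have Zdec: "Z = X ** C + Zp"
    unfolding Zp_def C_def by (simp add: matrix_diff_rdistrib matrix_mul_assoc)
  define Y1 where "Y1 = X - Zp ** transpose C - Zp ** transpose C - X ** C ** transpose C"
  define ER where "ER = EE + G"
  have Y1: "X ** transpose Y1 + Y1 ** transpose X = ER + ER"
    using ER_identity[where X=X and C=C and Zp=Zp] unfolding Y1_def ER_def EE_def G_def Zdec[symmetric] by simp
  define eR where "eR = vecm ER"
  define y0 where "y0 = (1/2) *\<^sub>R vecm Y1"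
  have Jy0: "J *v y0 = eR"
    unfolding y0_def J_def eR_def matrix_vector_mult_scaleR jac_works Y1 vecm_add scaleR_2[symmetric] by (simp add: vecm_scale)
  have orth: "g \<bullet> (J *v v) = 0" for v
    using range_orth[OF XZ, of "unvec v"] unfolding g_def G_def J_def by simp
  have eRg: "eR \<bullet> g = 0" using orth[of y0] Jy0 by (simp add: inner_commute)
  have edec: "e = eR - g" unfolding eR_def e_def g_def ER_def by (simp add: vecm_add)
  have nee: "norm e ^ 2 = norm eR ^ 2 + norm g ^ 2"
    unfolding edec power2_norm_eq_inner using eRg by (simp add: inner_diff_left inner_diff_right inner_commute)
  have al_le1: "\<alpha> \<le> 1"
  proof -
    have "norm g \<le> norm e" using nee by (metis abs_norm_cancel le_add_same_cancel2 power2_le_imp_le zero_le_power2 norm_ge_zero)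
    then show ?thesis using al ne by simp
  qed
  have al_pos: "\<alpha> > 0" using al ne ng by simp
  have sq1: "sqrt (1 - \<alpha>^2) = norm eR / norm e"
  proof -
    have h: "(norm eR)^2 = (norm e)^2 - (norm g)^2" using nee by simp
    have "1 - \<alpha>^2 = ((norm e)^2 - (norm g)^2) / (norm e)^2" unfolding al using ne by (simp add: power_divide field_simps)
    also have "\<dots> = (norm eR / norm e)^2" by (simp add: h power_divide)
    finally have "1 - \<alpha>^2 = (norm eR / norm e)^2" .
    then show ?thesis by simp
  qed
  define xx where "xx = vecm (X ** transpose X)"
  have Jx: "J *v vecm X = 2 *\<^sub>R xx" unfolding J_def xx_def jac_works vecm_add scaleR_2 ..
  have X0: "X \<noteq> 0"
  proof
    assume "X = 0" then have "transpose X ** X = 0" by simp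
    then show False using inv not_invertible_zero by metis
  qed
  have xx0: "xx \<noteq> 0" unfolding xx_def using XXt_nonzero[OF X0] by (simp add: vecm_inj[of _ 0, unfolded vecm_zero])
  have xxg: "xx \<bullet> g = 0" using orth[of "vecm X"] Jx by (simp add: inner_commute)
  define D where "D = (if eR \<noteq> 0 then eR else xx)"
  define yD where "yD = (if eR \<noteq> 0 then y0 else (1/2) *\<^sub>R vecm X)"
  have JyD: "J *v yD = D" unfolding D_def yD_def using Jy0 Jx by (simp add: matrix_vector_mult_scaleR)
  have D0: "D \<noteq> 0" unfolding D_def using xx0 by simp
  have Dg: "D \<bullet> g = 0" unfolding D_def using eRg xxg by simp
  have eD: "e \<bullet> D = norm eR * norm D"
  proof (cases "eR = 0")
    case True
    then show ?thesis unfolding D_def edec using xxg by (simp add: inner_commute)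
  next
    case False
    then show ?thesis unfolding D_def edec using eRg
      by (simp add: inner_diff_left inner_diff_right inner_commute norm_eq_sqrt_inner)
  qed
  have eg: "e \<bullet> g = -((norm g)^2)" unfolding edec using eRg by (simp add: inner_diff_left power2_norm_eq_inner)
  obtain m0 where m0: "m0 \<noteq> 0" "(transpose X ** X) *v m0 = \<sigma>^2 *s m0"
    using sigma_facts(1)[of X] \<sigma>_def by blast
  define m where "m = m0 /\<^sub>R norm m0"
  have nm: "norm m = 1" unfolding m_def using m0 by simp
  have Xm: "norm (X *v m)^2 = \<sigma>^2"
  proof -
    have "(transpose X ** X) *v m = \<sigma>^2 *\<^sub>R m"
      unfolding m_def using m0(2) by (simp add: matrix_vector_mult_scaleR scalar_mult_eq_scaleR)
    then have "m \<bullet> ((transpose X ** X) *v m) = \<sigma>^2" using nm by (simp add: power2_norm_eq_inner[symmetric])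
    then show ?thesis by (simp add: gram_inner)
  qed
  define U where "U = (\<lambda>i. (\<chi> a j. Zp$a$i * m$j) :: real^'r^'n)"
  define W0 where "W0 = (\<Sum>i\<in>UNIV. outer (vecm (U i)))"
  have wW0: "wvec W0 = g"
    unfolding W0_def g_def G_def
    using W0_construction(1)[OF XZ nm]
    by (simp add: wvec_sum wvec_outer U_def vecm_sum[symmetric])
  have cW0: "frob_inner (transpose J ** J) W0 = 2 * \<sigma>^2 * trG"
    unfolding W0_def using W0_construction(2)[OF XZ nm] Xm
    by (simp add: frob_inner_sum2 frob_JJ_outer U_def J_def trG_def G_def)
  have pW0: "psd W0" unfolding W0_def by (rule psd_sum) (auto simp: psd_outer)
  define Kx where "Kx = norm (J *v vecm X)^2"
  have Kx: "Kx > 0" unfolding Kx_def Jx using xx0 by simp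
  define \<rho> where "\<rho> = t / \<beta>"
  have rho0: "\<rho> \<ge> 0" unfolding \<rho>_def using t0 bpos by simp
  define \<rho>' where "\<rho>' = min \<rho> \<alpha>"
  have r'0: "\<rho>' \<ge> 0" "\<rho>' \<le> \<alpha>" "\<rho>' \<le> \<rho>" "\<rho>' \<le> 1" unfolding \<rho>'_def using rho0 al_pos al_le1 by auto
  have r2: "\<rho>'^2 \<le> 1" using r'0 by (simp add: power_le_one)
  define c where "c = sqrt (1 - \<rho>'^2) / norm D"
  define s where "s = \<rho>' / norm g"
  define \<mu> where "\<mu> = (2 * t * norm e - s * (2 * \<sigma>^2 * trG)) / Kx"
  have bne: "\<beta> * norm e = \<sigma>^2 * trG / norm g" using be ne by simp
  have scost: "s * (2 * \<sigma>^2 * trG) = 2 * \<rho>' * \<beta> * norm e"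
  proof -
    have "s * (2 * \<sigma>^2 * trG) = 2 * \<rho>' * (\<sigma>^2 * trG / norm g)" unfolding s_def by (simp add: field_simps)
    then show ?thesis unfolding bne[symmetric] by (simp add: mult_ac)
  qed
  have tt: "t = \<rho> * \<beta>" unfolding \<rho>_def using bpos by simp
  have mu0: "\<mu> \<ge> 0"
  proof -
    have "2 * t * norm e - s * (2 * \<sigma>^2 * trG) = 2 * \<beta> * norm e * (\<rho> - \<rho>')"
      unfolding scost tt by (simp add: algebra_simps)
    also have "\<dots> \<ge> 0" using bpos ne r'0 by simp
    finally show ?thesis unfolding \<mu>_def using Kx by simp
  qed
  define W where "W = s *\<^sub>R W0 + \<mu> *\<^sub>R outer (vecm X)"
  define y where "y = c *\<^sub>R yD + (\<mu> / 2) *\<^sub>R vecm X"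
  define V where "V = J *v y - wvec W"
  have V: "V = c *\<^sub>R D - s *\<^sub>R g"
    unfolding V_def y_def W_def
    by (simp add: matrix_vector_right_distrib matrix_vector_mult_scaleR JyD Jx wvec_add wvec_scale wW0
        wvec_outer xx_def[symmetric])
  have nV: "norm V = 1"
  proof -
    have "norm V ^ 2 = c^2 * norm D ^2 + s^2 * norm g ^2"
      unfolding V power2_norm_eq_inner using Dg
      by (simp add: inner_diff_left inner_diff_right inner_commute power2_eq_square)
    also have "\<dots> = 1" unfolding c_def s_def using D0 ng r2 by (simp add: power_divide)
    finally have "norm V ^ 2 = 1 ^ 2" by simp
    then show ?thesis using power2_eq_imp_eq[of "norm V" 1] by simp
  qed
  have V0: "V \<noteq> 0" using nV by auto
  have pW: "psd W" unfolding W_def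
    using pW0 psd_outer mu0 r'0 ng by (intro psd_add psd_scale) (auto simp: s_def)
  have costW: "frob_inner (transpose J ** J) W = 2 * t * norm e"
    unfolding W_def using Kx
    by (simp add: frob_inner_add2 frob_inner_scale2 cW0 frob_JJ_outer Kx_def[symmetric] \<mu>_def)
  have ratio: "frob_inner (transpose J ** J) W / (norm e * norm V) = 2 * t"
    using costW nV ne by simp
  define obj where "obj = (e \<bullet> V) / (norm e * norm V)"
  have objv: "obj = \<rho>' * \<alpha> + sqrt (1 - \<rho>'^2) * sqrt (1 - \<alpha>^2)"
  proof -
    have "e \<bullet> V = c * (norm eR * norm D) + s * (norm g)^2"
      unfolding V using eD eg by (simp add: inner_diff_right)
    also have "\<dots> = sqrt (1 - \<rho>'^2) * norm eR + \<rho>' * norm g"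
      unfolding c_def s_def using D0 ng by (simp add: power2_eq_square)
    finally have o1: "obj = \<rho>' * (norm g / norm e) + sqrt (1 - \<rho>'^2) * (norm eR / norm e)"
      unfolding obj_def nV using ne by (simp add: field_simps)
    show ?thesis unfolding sq1 using o1 by (simp only: al)
  qed
  have psi_le: "psi \<alpha> \<beta> t \<le> obj"
  proof (cases "\<rho> \<le> \<alpha>")
    case True
    then have "\<rho>' = \<rho>" unfolding \<rho>'_def by simp
    then show ?thesis unfolding psi_def objv \<rho>_def[symmetric] using True by (simp add: mult.commute)
  next
    case False
    then have "\<rho>' = \<alpha>" unfolding \<rho>'_def by simp
    moreover have "sqrt (1 - \<alpha>^2) * sqrt (1 - \<alpha>^2) = 1 - \<alpha>^2"
    proof -
      have "\<alpha>^2 \<le> 1" using al_le1 al_pos by (simp add: power_le_one)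
      then show ?thesis by (simp add: real_sqrt_mult_self)
    qed
    ultimately have "obj = 1" unfolding objv by (simp add: power2_eq_square)
    then show ?thesis unfolding psi_def \<rho>_def[symmetric] using False by simp
  qed
  define Sset where "Sset = {(err_vec X Z \<bullet> (jac X *v y - wvec W)) /
                            (norm (err_vec X Z) * norm (jac X *v y - wvec W)) | y W.
       jac X *v y - wvec W \<noteq> 0 \<and> psd W \<and>
       frob_inner (transpose (jac X) ** jac X) W /
          (norm (err_vec X Z) * norm (jac X *v y - wvec W)) = 2 * t}"
  have ct: "cos_theta X Z t = Sup Sset" unfolding cos_theta_def Sset_def ..
  have mem: "obj \<in> Sset"
    unfolding Sset_def obj_def ee using V0 pW ratio unfolding V_def J_def by blast
  have bdd: "bdd_above Sset"
  proof (rule bdd_aboveI[of _ 1])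
    fix x assume "x \<in> Sset"
    then obtain y :: "real^('r\<times>'n)" and W :: "real^('r\<times>'n)^('r\<times>'n)" where x: "x = (e \<bullet> (jac X *v y - wvec W)) / (norm e * norm (jac X *v y - wvec W))"
      and nz: "jac X *v y - wvec W \<noteq> 0" unfolding Sset_def ee by blast
    have "e \<noteq> 0" using ne by auto
    then show "x \<le> 1" unfolding x using cs_le1 nz by blast
  qed
  have "obj \<le> Sup Sset" by (rule cSup_upper[OF mem bdd])
  then show "psi \<alpha> \<beta> t \<le> cos_theta X Z t" using psi_le ct by simp
qed

end
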